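(* Let $\triangle$ be an apexed triangle with apex $a$, bottom side $bc$ and definer $s$, and let $x\in \mathsf{rCell}(\triangle)$. Let $y$ be the point where the ray from $a$ through $x$ meets the bottom side $bc$. Then the line segment $xy$ is contained in $\mathsf{rCell}(\triangle)$.
   Context: $P$ is a simple polygon, $S$ a finite set of points in $P$ with $|S|\ge 2$, and $d(x,y)$ the geodesic distance in $P$ (length of the shortest path between $x$ and $y$ contained in $P$). $\mathsf{Cell}(S,s)=\{x\in P: d(x,s)>d(x,s')\ \forall s'\in S\setminus\{s\}\}$. An apexed triangle is a Euclidean triangle $\triangle\subseteq P$ with corners $a,b,c$ such that $a$ (the apex) is a vertex of $P$, $b$ and $c$ lie on a common edge of $P$ (the segment $bc$ is the bottom side), together with a site $s\in S$ (the definer) such that $d(x,s)=\|x-a\|+d(a,s)$ for every $x\in\triangle$, where $\|\cdot\|$ is the Euclidean norm. The refined cell of $\triangle$ is $\mathsf{rCell}(\triangle)=\big(\mathrm{int}(\triangle)\cup (bc\setminus\{b,c\})\big)\cap\mathsf{Cell}(S,s)$. *)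

theory Defs
  imports "HOL-Analysis.Analysis"
begin

fun polyline :: "complex list \<Rightarrow> real \<Rightarrow> complex" where
  "polyline [] = linepath 0 0"
| "polyline [v] = linepath v v"
| "polyline [v, w] = linepath v w"
| "polyline (v # w # u # vs) = linepath v w +++ polyline (w # u # vs)"

definition boundary_curve :: "complex list \<Rightarrow> real \<Rightarrow> complex" where
  "boundary_curve vs = polyline (vs @ [hd vs])"

definition poly_edge :: "complex list \<Rightarrow> nat \<Rightarrow> complex set" where
  "poly_edge vs i = closed_segment (vs ! i) (vs ! ((i + 1) mod length vs))"

definition simple_polygon :: "complex set \<Rightarrow> complex list \<Rightarrow> bool" where
  "simple_polygon P vs \<longleftrightarrow>
     length vs \<ge> 3 \<and>
     simple_path (boundary_curve vs) \<and>
     (\<forall>i < length vs. \<not> collinear {vs ! i, vs ! ((i + 1) mod length vs),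
                                       vs ! ((i + 2) mod length vs)}) \<and>
     P = path_image (boundary_curve vs) \<union> inside (path_image (boundary_curve vs))"

text \<open>L is an upper bound of the length of g (length = supremum of inscribed
  polygonal lengths over partitions of [0,1]).\<close>
definition length_le :: "(real \<Rightarrow> complex) \<Rightarrow> real \<Rightarrow> bool" where
  "length_le g L \<longleftrightarrow>
     (\<forall>(t :: nat \<Rightarrow> real) n. t 0 = 0 \<longrightarrow> t n = 1 \<longrightarrow> (\<forall>i<n. t i \<le> t (Suc i)) \<longrightarrow>
        (\<Sum>i<n. dist (g (t i)) (g (t (Suc i)))) \<le> L)"

definition geodesic_dist :: "complex set \<Rightarrow> complex \<Rightarrow> complex \<Rightarrow> real" where
  "geodesic_dist P x y =
     Inf {L. \<exists>g. path g \<and> path_image g \<subseteq> P \<and> pathstart g = x \<and> pathfinish g = y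
              \<and> length_le g L}"

definition Cell :: "complex set \<Rightarrow> complex set \<Rightarrow> complex \<Rightarrow> complex set" where
  "Cell P S s = {x \<in> P. \<forall>s' \<in> S - {s}. geodesic_dist P x s > geodesic_dist P x s'}"

definition apexed_triangle ::
  "complex set \<Rightarrow> complex list \<Rightarrow> complex set \<Rightarrow> complex \<Rightarrow> complex \<Rightarrow> complex \<Rightarrow> complex \<Rightarrow> bool" where
  "apexed_triangle P vs S a b c s \<longleftrightarrow>
     \<not> collinear {a, b, c} \<and>
     convex hull {a, b, c} \<subseteq> P \<and>
     a \<in> set vs \<and>
     (\<exists>i < length vs. b \<in> poly_edge vs i \<and> c \<in> poly_edge vs i) \<and>
     s \<in> S \<and>
     (\<forall>x \<in> convex hull {a, b, c}. geodesic_dist P x s = norm (x - a) + geodesic_dist P a s)"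

definition rCell :: "complex set \<Rightarrow> complex set \<Rightarrow> complex \<Rightarrow> complex \<Rightarrow> complex \<Rightarrow> complex \<Rightarrow> complex set" where
  "rCell P S a b c s =
     (interior (convex hull {a, b, c}) \<union> (closed_segment b c - {b, c})) \<inter> Cell P S s"

end

theory Submission
  imports Defs
begin


lemma dist_linepath_pts: "dist (linepath p q \<alpha>) (linepath p q \<beta>) = \<bar>\<alpha> - \<beta>\<bar> * dist p q"
proof -
  have "linepath p q \<alpha> - linepath p q \<beta> = (\<alpha> - \<beta>) *\<^sub>R (q - p)"
    by (simp add: linepath_def algebra_simps)
  then show ?thesis by (simp add: dist_norm norm_minus_commute)
qed

lemma join_len:
  assumes "pathstart g = q" "length_le g L"
  shows "length_le (linepath p q +++ g) (dist p q + L)"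
  unfolding length_le_def
proof (intro allI impI)
  fix t :: "nat \<Rightarrow> real" and n
  assume t0: "t 0 = 0" and tn: "t n = 1" and mono: "\<forall>i<n. t i \<le> t (Suc i)"
  define h where "h = linepath p q +++ g"
  define u where "u i = max 0 (2 * t i - 1)" for i
  define w where "w i = min 1 (2 * t i)" for i
  have g0: "g 0 = q" using assms(1) by (simp add: pathstart_def)
  have step: "dist (h (t i)) (h (t (Suc i))) \<le> dist (g (u i)) (g (u (Suc i))) + dist p q * (w (Suc i) - w i)"
    if "i<n" for i
  proof -
    have le: "t i \<le> t (Suc i)" using mono that by auto
    consider "t (Suc i) \<le> 1/2" | "t i > 1/2" | "t i \<le> 1/2" "t (Suc i) > 1/2" by linarith
    then show ?thesis
    proof cases
      case 1
      then have "h (t i) = linepath p q (2 * t i)" "h (t (Suc i)) = linepath p q (2 * t (Suc i))"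
        "u i = 0" "u (Suc i) = 0" "w i = 2 * t i" "w (Suc i) = 2 * t (Suc i)"
        using le by (auto simp: h_def joinpaths_def u_def w_def)
      then show ?thesis using le by (simp add: dist_linepath_pts algebra_simps)
    next
      case 2
      then have "h (t i) = g (2 * t i - 1)" "h (t (Suc i)) = g (2 * t (Suc i) - 1)"
        "u i = 2 * t i - 1" "u (Suc i) = 2 * t (Suc i) - 1" "w i = 1" "w (Suc i) = 1"
        using le by (auto simp: h_def joinpaths_def u_def w_def)
      then show ?thesis by simp
    next
      case 3
      then have e: "h (t i) = linepath p q (2 * t i)" "h (t (Suc i)) = g (2 * t (Suc i) - 1)"
        "u i = 0" "u (Suc i) = 2 * t (Suc i) - 1" "w i = 2 * t i" "w (Suc i) = 1"
        using le by (auto simp: h_def joinpaths_def u_def w_def)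
      have "dist (h (t i)) (h (t (Suc i))) \<le> dist (h (t i)) q + dist q (h (t (Suc i)))"
        by (rule dist_triangle)
      also have "dist (h (t i)) q = (1 - 2 * t i) * dist p q"
        using e(1) dist_linepath_pts[of p q "2 * t i" 1] 3 by (simp add: linepath_1')
      finally have "dist (h (t i)) (h (t (Suc i))) \<le> (1 - 2 * t i) * dist p q + dist q (h (t (Suc i)))" .
      moreover have "h (t (Suc i)) = g (u (Suc i))" using e by simp
      ultimately show ?thesis unfolding e(3,5,6) g0 by (simp add: algebra_simps)
    qed
  qed
  have "(\<Sum>i<n. dist (h (t i)) (h (t (Suc i))))
      \<le> (\<Sum>i<n. dist (g (u i)) (g (u (Suc i))) + dist p q * (w (Suc i) - w i))"
    by (rule sum_mono) (use step in auto)
  also have "\<dots> = (\<Sum>i<n. dist (g (u i)) (g (u (Suc i)))) + dist p q * (w n - w 0)"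
    by (simp add: sum.distrib sum_distrib_left[symmetric] sum_lessThan_telescope)
  also have "(\<Sum>i<n. dist (g (u i)) (g (u (Suc i)))) \<le> L"
  proof -
    have "u 0 = 0" "u n = 1" using t0 tn by (auto simp: u_def)
    moreover have "\<forall>i<n. u i \<le> u (Suc i)" using mono by (auto simp: u_def)
    ultimately show ?thesis using assms(2) unfolding length_le_def by blast
  qed
  also have "w n - w 0 = 1" using t0 tn by (simp add: w_def)
  finally show "(\<Sum>i<n. dist ((linepath p q +++ g) (t i)) ((linepath p q +++ g) (t (Suc i)))) \<le> dist p q + L"
    by (simp add: h_def)
qed

definition GS :: "complex set \<Rightarrow> complex \<Rightarrow> complex \<Rightarrow> real set" where
  "GS P x y = {L. \<exists>g. path g \<and> path_image g \<subseteq> P \<and> pathstart g = x \<and> pathfinish g = y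
              \<and> length_le g L}"

lemma gd_GS: "geodesic_dist P x y = Inf (GS P x y)"
  by (simp add: geodesic_dist_def GS_def)

lemma GS_nonneg: "L \<in> GS P x y \<Longrightarrow> 0 \<le> L"
proof -
  assume "L \<in> GS P x y"
  then obtain g where "length_le g L" by (auto simp: GS_def)
  then have "(\<Sum>i<1. dist (g ((\<lambda>i::nat. if i = 0 then 0 else 1) i)) (g ((\<lambda>i::nat. if i = 0 then 0 else 1) (Suc i)))) \<le> L"
    unfolding length_le_def by (erule_tac x="\<lambda>i::nat. if i = 0 then 0 else 1" in allE, erule_tac x=1 in allE) auto
  then show ?thesis by (simp) (meson zero_le_dist order_trans)
qed

lemma GS_shift:
  assumes "L \<in> GS P q y" "closed_segment p q \<subseteq> P"
  shows "dist p q + L \<in> GS P p y"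
proof -
  obtain g where g: "path g" "path_image g \<subseteq> P" "pathstart g = q" "pathfinish g = y" "length_le g L"
    using assms(1) by (auto simp: GS_def)
  show ?thesis unfolding GS_def
    apply (rule CollectI, rule exI[of _ "linepath p q +++ g"])
    using g assms(2) join_len[OF g(3) g(5), of p]
    by (auto simp: path_image_join)
qed

lemma geo_tri:
  assumes "GS P q y \<noteq> {}" "closed_segment p q \<subseteq> P"
  shows "geodesic_dist P p y \<le> dist p q + geodesic_dist P q y"
proof -
  have bdd: "bdd_below (GS P p y)" by (rule bdd_belowI[of _ 0]) (rule GS_nonneg)
  have "geodesic_dist P p y - dist p q \<le> L" if "L \<in> GS P q y" for L
  proof -
    have "geodesic_dist P p y \<le> dist p q + L"
      unfolding gd_GS using GS_shift[OF that assms(2)] bdd by (rule cInf_lower)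
    then show ?thesis by simp
  qed
  then have "geodesic_dist P p y - dist p q \<le> Inf (GS P q y)"
    using assms(1) by (intro cInf_greatest) auto
  then show ?thesis by (simp add: gd_GS)
qed


lemma indep:
  assumes nc: "\<not> collinear {a, b, c::complex}" and e: "of_real p * (b - a) + of_real q * (c - a) = 0"
  shows "p = 0 \<and> q = 0"
proof -
  have nc1: "\<not> collinear {0, b - a, c - a}" using nc collinear_3[of b a c] by (simp add: insert_commute)
  have nc2: "\<not> collinear {0, c - a, b - a}" using nc1 by (simp add: insert_commute)
  have ba: "b - a \<noteq> 0" and ca: "c - a \<noteq> 0" using nc1 collinear_lemma by blast+
  show ?thesis
  proof (cases "p = 0")
    case True
    then show ?thesis using e ca by simp
  next
    case False
    then have "b - a = (- q / p) *\<^sub>R (c - a)" using e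
      by (simp add: scaleR_conv_of_real field_simps add_eq_0_iff2)
    then have "collinear {0, c - a, b - a}" using collinear_lemma by blast
    then show ?thesis using nc2 by blast
  qed
qed

lemma interior_tri:
  assumes "\<not> collinear {a, b, c::complex}"
  shows "interior (convex hull {a,b,c}) =
         {v. \<exists>x y z. 0 < x \<and> 0 < y \<and> 0 < z \<and> x + y + z = 1 \<and> of_real x * a + of_real y * b + of_real z * c = v}"
  using interior_convex_hull_3_minimal[OF assms] by (simp add: scaleR_conv_of_real)

lemma seg_param: "(y::complex) \<in> closed_segment b c \<longleftrightarrow> (\<exists>m. 0 \<le> m \<and> m \<le> 1 \<and> y = b + of_real m * (c - b))"
  by (auto simp: closed_segment_def scaleR_conv_of_real algebra_simps)



lemma geom:
  fixes a b c x y z :: complex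
  assumes nc: "\<not> collinear {a, b, c}"
    and xin: "x \<in> interior (convex hull {a,b,c}) \<union> (closed_segment b c - {b, c})"
    and yin: "y \<in> closed_segment b c" and t0: "t \<ge> 0" and yeq: "y = a + of_real t * (x - a)"
    and zin: "z \<in> closed_segment x y"
  shows "z \<in> interior (convex hull {a,b,c}) \<union> (closed_segment b c - {b, c})
         \<and> norm (z - a) = norm (x - a) + norm (z - x)"
proof -
  have bc: "b \<noteq> c" using nc by auto
  obtain m where m: "0 \<le> m" "m \<le> 1" "y = b + of_real m * (c - b)" using yin seg_param by blast
  obtain r where r: "0 \<le> r" "r \<le> 1" "z = x + of_real r * (y - x)" using zin seg_param by blast
  from xin show ?thesis
  proof (elim UnE)
    assume xi: "x \<in> interior (convex hull {a,b,c})"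
    have "x \<in> {v. \<exists>x y z. 0 < x \<and> 0 < y \<and> 0 < z \<and> x + y + z = 1 \<and> of_real x * a + of_real y * b + of_real z * c = v}"
      using xi interior_tri[OF nc] by simp
    then obtain \<alpha> \<beta> \<gamma> where abg: "0 < \<alpha>" "0 < \<beta>" "0 < \<gamma>" "\<alpha> + \<beta> + \<gamma> = 1"
      "x = of_real \<alpha> * a + of_real \<beta> * b + of_real \<gamma> * c"
      by auto
    have al: "of_real \<alpha> = (1::complex) - of_real \<beta> - of_real \<gamma>"
    proof -
      have "\<alpha> = 1 - \<beta> - \<gamma>" using abg(4) by linarith
      then show ?thesis by simp
    qed
    have "of_real (t*\<beta> - (1-m)) * (b-a) + of_real (t*\<gamma> - m) * (c-a)
          = (a + of_real t * (x - a)) - (b + of_real m * (c - b))"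
      by (simp add: abg(5) al algebra_simps)
    also have "\<dots> = 0" using yeq m(3) by simp
    finally have "t*\<beta> - (1-m) = 0 \<and> t*\<gamma> - m = 0" by (rule indep[OF nc])
    then have tb: "t*\<beta> = 1 - m" and tg: "t*\<gamma> = m" by auto
    have tsum: "t * (\<beta> + \<gamma>) = 1" using tb tg by (simp add: algebra_simps)
    have bg1: "\<beta> + \<gamma> < 1" using abg by linarith
    have tpos: "t > 0" using tsum t0 by (cases "t = 0") auto
    have t1: "t > 1"
    proof (rule ccontr)
      assume "\<not> t > 1"
      then have "t * (\<beta> + \<gamma>) < 1" using bg1 tpos abg
        by (smt (verit) mult_less_cancel_left1 mult_le_cancel_left1)
      then show False using tsum by simp
    qed
    have m0: "m > 0" using tg tpos abg(3) by (metis mult_pos_pos)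
    have m1: "m < 1" proof - have "t*\<beta> > 0" using tpos abg(2) by simp then show ?thesis using tb by linarith qed
    define \<sigma> where "\<sigma> = 1 + r * (t - 1)"
    have za: "z - a = of_real \<sigma> * (x - a)"
      by (simp add: r(3) yeq \<sigma>_def algebra_simps)
    have zx: "z - x = of_real (r * (t - 1)) * (x - a)"
      by (simp add: r(3) yeq algebra_simps)
    have sg: "\<sigma> \<ge> 1" using r t1 by (simp add: \<sigma>_def)
    have nrm: "norm (z - a) = norm (x - a) + norm (z - x)"
    proof -
      have "norm (z - a) = \<sigma> * norm (x - a)" unfolding za norm_mult using sg by simp
      moreover have "norm (z - x) = (r * (t - 1)) * norm (x - a)" unfolding zx norm_mult norm_of_real using r t1 by simp
      ultimately show ?thesis by (simp add: \<sigma>_def algebra_simps)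
    qed
    show ?thesis
    proof (cases "r = 1")
      case True
      then have "z = y" using r(3) by simp
      moreover have "y \<noteq> b" using m0 bc m(3) by auto
      moreover have "y \<noteq> c"
      proof
        assume "y = c"
        then have "of_real (1 - m) * (c - b) = 0" using m(3) by (simp add: algebra_simps)
        then show False using m1 bc by simp
      qed
      ultimately show ?thesis using yin nrm by auto
    next
      case False
      then have rl: "r < 1" using r by simp
      have "r*(t-1) < 1*(t-1)" using rl t1 by (intro mult_strict_right_mono) auto
      then have "\<sigma> < t" unfolding \<sigma>_def by simp
      then have "\<sigma> * (\<beta> + \<gamma>) < t * (\<beta> + \<gamma>)" using abg by (intro mult_strict_right_mono) auto
      then have pos: "1 - \<sigma> * (\<beta> + \<gamma>) > 0" using tsum by linarith
      have "z = of_real (1 - \<sigma> * (\<beta> + \<gamma>)) * a + of_real (\<sigma> * \<beta>) * b + of_real (\<sigma> * \<gamma>) * c"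
      proof -
        have "z = a + of_real \<sigma> * (x - a)" using za by (simp add: algebra_simps)
        then show ?thesis by (simp add: abg(5) al algebra_simps)
      qed
      moreover have "\<sigma> * \<beta> > 0" "\<sigma> * \<gamma> > 0" using sg abg by auto
      ultimately have "\<exists>p q w. 0 < p \<and> 0 < q \<and> 0 < w \<and> p + q + w = 1 \<and> of_real p * a + of_real q * b + of_real w * c = z"
        using pos
        apply (rule_tac x="1 - \<sigma> * (\<beta> + \<gamma>)" in exI)
        apply (rule_tac x="\<sigma> * \<beta>" in exI)
        apply (rule_tac x="\<sigma> * \<gamma>" in exI)
        by (simp add: algebra_simps)
      then have "z \<in> interior (convex hull {a,b,c})"
        unfolding interior_tri[OF nc] by simp
      then show ?thesis using nrm by auto
    qed
  next
    assume xs: "x \<in> closed_segment b c - {b, c}"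
    obtain n where n: "x = b + of_real n * (c - b)" using xs seg_param by blast
    have "of_real (t*(1-n) - (1-m)) * (b-a) + of_real (t*n - m) * (c-a)
          = (a + of_real t * (x - a)) - (b + of_real m * (c - b))"
      by (simp add: n algebra_simps)
    also have "\<dots> = 0" using yeq m(3) by simp
    finally have "t*(1-n) - (1-m) = 0 \<and> t*n - m = 0" by (rule indep[OF nc])
    then have "t = 1" by (simp add: algebra_simps)
    then have "y = x" using yeq by simp
    then have "z = x" using r(3) by simp
    then show ?thesis using xs by simp
  qed
qed


theorem mainTheorem7:
  fixes P S :: "complex set" and vs :: "complex list" and a b c s x y :: complex
  assumes "simple_polygon P vs"
    and "finite S" and "S \<subseteq> P" and "card S \<ge> 2"
    and "apexed_triangle P vs S a b c s"
    and "x \<in> rCell P S a b c s"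
    and "y \<in> closed_segment b c" and "\<exists>t \<ge> 0. y = a + of_real t * (x - a)"
  shows "closed_segment x y \<subseteq> rCell P S a b c s"
proof
  fix z assume zin: "z \<in> closed_segment x y"
  define H where "H = convex hull {a, b, c}"
  have nc: "\<not> collinear {a, b, c}" and HP: "H \<subseteq> P"
    and dd: "\<forall>x \<in> H. geodesic_dist P x s = norm (x - a) + geodesic_dist P a s"
    using assms(5) unfolding apexed_triangle_def H_def by auto
  have xR: "x \<in> interior H \<union> (closed_segment b c - {b, c})" and xC: "x \<in> Cell P S s"
    using assms(6) unfolding rCell_def H_def by auto
  obtain t where t: "t \<ge> 0" "y = a + of_real t * (x - a)" using assms(8) by blast
  from geom[OF nc xR[unfolded H_def] assms(7) t zin]
  have zR: "z \<in> interior H \<union> (closed_segment b c - {b, c})"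
    and nrm: "norm (z - a) = norm (x - a) + norm (z - x)" by (auto simp: H_def)
  have cH: "convex H" unfolding H_def by (rule convex_convex_hull)
  have bcH: "closed_segment b c \<subseteq> H" unfolding H_def
    by (rule closed_segment_subset) (auto intro: hull_inc convex_convex_hull)
  have xH: "x \<in> H" using xR bcH interior_subset by auto
  have yH: "y \<in> H" using assms(7) bcH by auto
  have zH: "z \<in> H" using zin closed_segment_subset[OF xH yH cH] by auto
  have segP: "closed_segment z x \<subseteq> P" using closed_segment_subset[OF zH xH cH] HP by auto
  have segP': "closed_segment x z \<subseteq> P" using segP by (simp add: closed_segment_commute)
  have dzs: "geodesic_dist P z s = geodesic_dist P x s + norm (z - x)"
    using dd xH zH nrm by simp
  have "z \<in> Cell P S s"
    unfolding Cell_def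
  proof (intro CollectI conjI ballI)
    show "z \<in> P" using zH HP by auto
    fix s' assume s': "s' \<in> S - {s}"
    have lt: "geodesic_dist P x s > geodesic_dist P x s'" using xC s' unfolding Cell_def by auto
    show "geodesic_dist P z s > geodesic_dist P z s'"
    proof (cases "GS P x s' = {}")
      case False
      have "geodesic_dist P z s' \<le> dist z x + geodesic_dist P x s'"
        by (rule geo_tri[OF False segP])
      then show ?thesis using lt dzs by (simp add: dist_norm)
    next
      case True
      have "GS P z s' = {}"
      proof (rule ccontr)
        assume "GS P z s' \<noteq> {}"
        then obtain L where "L \<in> GS P z s'" by blast
        from GS_shift[OF this segP'] True show False by blast
      qed
      then have "geodesic_dist P z s' = geodesic_dist P x s'" using True by (simp add: gd_GS)
      then show ?thesis using lt dzs norm_ge_zero[of "z - x"] by linarith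
    qed
  qed
  then show "z \<in> rCell P S a b c s" using zR unfolding rCell_def H_def by auto
qed

end
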